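(* Let $L=\langle S,A,\to\rangle$ be a labelled transition system. For all $x,y\in\{o,b\}$, the relation $\equiv_{E(x,y)}$ is an $(x,y)$-generic bisimulation.
   Context: An LTS is $\langle S,A,\to\rangle$ with states $S$, actions $A$ containing the internal action $\tau$, and $\to\subseteq S\times A\times S$; write $s\xrightarrow{a}t$, and $\twoheadrightarrow$ for the reflexive-transitive closure of $\xrightarrow{\tau}$. For $R\subseteq S\times S$ and $s,s',t$: $s\twoheadrightarrow_{o,R,t}s'$ iff $s\twoheadrightarrow s'$; $s\twoheadrightarrow_{b,R,t}s'$ iff $s\twoheadrightarrow s'$, $t\,R\,s$ and $t\,R\,s'$. For $x,y\in\{o,b\}$, a symmetric $R$ is an $(x,y)$-generic bisimulation if whenever $s\,R\,t$ and $s\xrightarrow{a}s'$, either $a=\tau$ and $s'\,R\,t$, or there exist $t',t_1,t_2$ with $t\twoheadrightarrow_{x,R,s}t_1\xrightarrow{a}t_2\twoheadrightarrow_{y,R,s'}t'$ and $s'\,R\,t'$. Generic bisimulation game. Let $\frown,\smile$ be formal tags and $E\subseteq\{\frown,\smile\}$. Spoiler-owned configurations $\langle (s,t),c,m,r\rangle_S$ and Duplicator-owned $\langle (s,t),c,m,r\rangle_D$ have $(s,t)\in S\times S$, $c\in (A\times S)\cup\{\dagger\}$, $m\in (S\times\{\frown,\smile\})\cup\{\dagger\}$, $r\in\{*,\checkmark\}$. From $\langle (s,t),c,m,r\rangle_S$ Spoiler may: (S1) move to $\langle (s,t),c,m,*\rangle_D$ if $c\neq\dagger$; (S2a) for some $s\xrightarrow{a}s'$,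 move to $\langle (s,t),(a,s'),(t,\frown),*\rangle_D$ if $c=\dagger$; (S2b) for some $s\xrightarrow{a}s'$, move to $\langle (s,t),(a,s'),(t,\frown),\checkmark\rangle_D$ if $c\neq (a,s')$; (S3) for some $t\xrightarrow{a}t'$, move to $\langle (t,s),(a,t'),(s,\frown),\checkmark\rangle_D$. From $\langle (u,v),(a,u'),(\bar v,f),r\rangle_D$ Duplicator may: (D1) move to $\langle (u',\bar v),\dagger,\dagger,\checkmark\rangle_S$ if $a=\tau$; (D2) if $f=\frown$ and $\bar v\xrightarrow{a}v'$: (a) move to $\langle (u',v'),(a,u'),(v',\smile),*\rangle_S$, or (b) move to $\langle (u',v'),\dagger,\dagger,\checkmark\rangle_S$, or (c) only if $\smile\in E$, move to $\langle (u,v),(a,u'),(v',\smile),*\rangle_S$; (D3) for some $\bar v\xrightarrow{\tau}v'$: (a) move to $\langle (u,v'),(a,u'),(v',f),*\rangle_S$, or (b) only if $f=\smile$, move to $\langle (u',v'),\dagger,\dagger,\checkmark\rangle_S$, or (c) only if $f\in E$, move to $\langle (u,v),(a,u'),(v',f),*\rangle_S$. Duplicator wins a finite play if Spoiler gets stuck, and an infinite play if it has infinitely many $\checkmark$ rewards; other plays are won by Spoiler. $s\equiv_E t$ iff Duplicator has a strategy winning all plays from $\langle (s,t),\dagger,\dagger,*\rangle_S$. $E(x,y)$ is the smallest set with $\frown\in E(o,y)$ and $\smile\in E(x,o)$ for all $x,y\in\{o,b\}$. *)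

theory Defs
  imports Main
begin

definition tau_steps :: "('s \<Rightarrow> 'a \<Rightarrow> 's \<Rightarrow> bool) \<Rightarrow> 'a \<Rightarrow> 's \<Rightarrow> 's \<Rightarrow> bool" where
  "tau_steps T tau = (\<lambda>s s'. T s tau s')\<^sup>*\<^sup>*"

datatype mode = Mo | Mb

definition mstep :: "('s \<Rightarrow> 'a \<Rightarrow> 's \<Rightarrow> bool) \<Rightarrow> 'a \<Rightarrow> mode \<Rightarrow> ('s \<Rightarrow> 's \<Rightarrow> bool)
    \<Rightarrow> 's \<Rightarrow> 's \<Rightarrow> 's \<Rightarrow> bool" where
  "mstep T tau x R t s s' =
     (case x of
        Mo \<Rightarrow> tau_steps T tau s s'
      | Mb \<Rightarrow> tau_steps T tau s s' \<and> R t s \<and> R t s')"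

definition generic_bisim :: "('s \<Rightarrow> 'a \<Rightarrow> 's \<Rightarrow> bool) \<Rightarrow> 'a \<Rightarrow> mode \<Rightarrow> mode
    \<Rightarrow> ('s \<Rightarrow> 's \<Rightarrow> bool) \<Rightarrow> bool" where
  "generic_bisim T tau x y R \<longleftrightarrow>
     (\<forall>s t. R s t \<longrightarrow> R t s) \<and>
     (\<forall>s t a s'. R s t \<and> T s a s' \<longrightarrow>
        (a = tau \<and> R s' t) \<or>
        (\<exists>t' t1 t2. mstep T tau x R s t t1 \<and> T t1 a t2 \<and> mstep T tau y R s' t2 t' \<and> R s' t'))"

datatype owner = Spo | Dup
datatype tag = Frown | Smile
datatype reward = Star | Check

text \<open>Conf own (s,t) c m r; c = None stands for dagger, m = None stands for dagger.\<close>
datatype ('s, 'a) conf = Conf owner "'s \<times> 's" "('a \<times> 's) option" "('s \<times> tag) option" reward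

fun owner_of :: "('s, 'a) conf \<Rightarrow> owner" where
  "owner_of (Conf o' p c m r) = o'"

fun reward_of :: "('s, 'a) conf \<Rightarrow> reward" where
  "reward_of (Conf o' p c m r) = r"

inductive gmove :: "('s \<Rightarrow> 'a \<Rightarrow> 's \<Rightarrow> bool) \<Rightarrow> 'a \<Rightarrow> tag set
    \<Rightarrow> ('s, 'a) conf \<Rightarrow> ('s, 'a) conf \<Rightarrow> bool" for T tau E where
  S1: "c \<noteq> None \<Longrightarrow> gmove T tau E (Conf Spo (s, t) c m r) (Conf Dup (s, t) c m Star)"
| S2a: "T s a s' \<Longrightarrow>
    gmove T tau E (Conf Spo (s, t) None m r) (Conf Dup (s, t) (Some (a, s')) (Some (t, Frown)) Star)"
| S2b: "T s a s' \<Longrightarrow> c \<noteq> Some (a, s') \<Longrightarrow>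
    gmove T tau E (Conf Spo (s, t) c m r) (Conf Dup (s, t) (Some (a, s')) (Some (t, Frown)) Check)"
| S3: "T t a t' \<Longrightarrow>
    gmove T tau E (Conf Spo (s, t) c m r) (Conf Dup (t, s) (Some (a, t')) (Some (s, Frown)) Check)"
| D1: "a = tau \<Longrightarrow>
    gmove T tau E (Conf Dup (u, v) (Some (a, u')) (Some (vb, f)) r) (Conf Spo (u', vb) None None Check)"
| D2a: "f = Frown \<Longrightarrow> T vb a v' \<Longrightarrow>
    gmove T tau E (Conf Dup (u, v) (Some (a, u')) (Some (vb, f)) r)
                  (Conf Spo (u', v') (Some (a, u')) (Some (v', Smile)) Star)"
| D2b: "f = Frown \<Longrightarrow> T vb a v' \<Longrightarrow>
    gmove T tau E (Conf Dup (u, v) (Some (a, u')) (Some (vb, f)) r) (Conf Spo (u', v') None None Check)"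
| D2c: "f = Frown \<Longrightarrow> T vb a v' \<Longrightarrow> Smile \<in> E \<Longrightarrow>
    gmove T tau E (Conf Dup (u, v) (Some (a, u')) (Some (vb, f)) r)
                  (Conf Spo (u, v) (Some (a, u')) (Some (v', Smile)) Star)"
| D3a: "T vb tau v' \<Longrightarrow>
    gmove T tau E (Conf Dup (u, v) (Some (a, u')) (Some (vb, f)) r)
                  (Conf Spo (u, v') (Some (a, u')) (Some (v', f)) Star)"
| D3b: "T vb tau v' \<Longrightarrow> f = Smile \<Longrightarrow>
    gmove T tau E (Conf Dup (u, v) (Some (a, u')) (Some (vb, f)) r) (Conf Spo (u', v') None None Check)"
| D3c: "T vb tau v' \<Longrightarrow> f \<in> E \<Longrightarrow>
    gmove T tau E (Conf Dup (u, v) (Some (a, u')) (Some (vb, f)) r)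
                  (Conf Spo (u, v) (Some (a, u')) (Some (v', f)) Star)"

text \<open>Duplicator strategies are history dependent: they map the play so far
  (a nonempty list of configurations, ending in the current one) to the next configuration.\<close>
type_synonym ('s, 'a) dstrategy = "('s, 'a) conf list \<Rightarrow> ('s, 'a) conf"

definition consistent_prefix :: "('s \<Rightarrow> 'a \<Rightarrow> 's \<Rightarrow> bool) \<Rightarrow> 'a \<Rightarrow> tag set
    \<Rightarrow> ('s, 'a) dstrategy \<Rightarrow> ('s, 'a) conf \<Rightarrow> ('s, 'a) conf list \<Rightarrow> bool" where
  "consistent_prefix T tau E \<sigma> c0 ps \<longleftrightarrow>
     ps \<noteq> [] \<and> hd ps = c0 \<and>
     (\<forall>i. Suc i < length ps \<longrightarrow>
        gmove T tau E (ps ! i) (ps ! Suc i) \<and>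
        (owner_of (ps ! i) = Dup \<longrightarrow> ps ! Suc i = \<sigma> (take (Suc i) ps)))"

definition consistent_inf_play :: "('s \<Rightarrow> 'a \<Rightarrow> 's \<Rightarrow> bool) \<Rightarrow> 'a \<Rightarrow> tag set
    \<Rightarrow> ('s, 'a) dstrategy \<Rightarrow> ('s, 'a) conf \<Rightarrow> (nat \<Rightarrow> ('s, 'a) conf) \<Rightarrow> bool" where
  "consistent_inf_play T tau E \<sigma> c0 p \<longleftrightarrow>
     p 0 = c0 \<and>
     (\<forall>i. gmove T tau E (p i) (p (Suc i)) \<and>
        (owner_of (p i) = Dup \<longrightarrow> p (Suc i) = \<sigma> (map p [0..<Suc i])))"

definition dup_winning :: "('s \<Rightarrow> 'a \<Rightarrow> 's \<Rightarrow> bool) \<Rightarrow> 'a \<Rightarrow> tag set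
    \<Rightarrow> ('s, 'a) dstrategy \<Rightarrow> ('s, 'a) conf \<Rightarrow> bool" where
  "dup_winning T tau E \<sigma> c0 \<longleftrightarrow>
     (\<forall>ps. consistent_prefix T tau E \<sigma> c0 ps \<and> owner_of (last ps) = Dup \<and>
           (\<exists>c'. gmove T tau E (last ps) c') \<longrightarrow> gmove T tau E (last ps) (\<sigma> ps)) \<and>
     (\<forall>ps. consistent_prefix T tau E \<sigma> c0 ps \<and> (\<nexists>c'. gmove T tau E (last ps) c')
           \<longrightarrow> owner_of (last ps) = Spo) \<and>
     (\<forall>p. consistent_inf_play T tau E \<sigma> c0 p \<longrightarrow> (\<exists>\<^sub>\<infinity>i. reward_of (p i) = Check))"

definition game_equiv :: "('s \<Rightarrow> 'a \<Rightarrow> 's \<Rightarrow> bool) \<Rightarrow> 'a \<Rightarrow> tag set \<Rightarrow> 's \<Rightarrow> 's \<Rightarrow> bool" where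
  "game_equiv T tau E s t \<longleftrightarrow> (\<exists>\<sigma>. dup_winning T tau E \<sigma> (Conf Spo (s, t) None None Star))"

definition Eset :: "mode \<Rightarrow> mode \<Rightarrow> tag set" where
  "Eset x y = {f. (f = Frown \<and> x = Mo) \<or> (f = Smile \<and> y = Mo)}"

end

theory Submission imports Defs "HOL-Library.Infinite_Set" begin

context fixes T :: "'s \<Rightarrow> 'a \<Rightarrow> 's \<Rightarrow> bool" and tau :: 'a and E :: "tag set"
begin

lemma cp_hd: "consistent_prefix T tau E \<sigma> c0 ps \<Longrightarrow> ps = c0 # tl ps"
  unfolding consistent_prefix_def by (cases ps) auto

lemma cp_single: "consistent_prefix T tau E \<sigma> c0 [c0]"
  unfolding consistent_prefix_def by auto

lemma cp_cons: "consistent_prefix T tau E \<sigma> c0 (c0 # c1 # qs) \<longleftrightarrow>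
   gmove T tau E c0 c1 \<and> (owner_of c0 = Dup \<longrightarrow> c1 = \<sigma> [c0]) \<and>
   consistent_prefix T tau E (\<lambda>zs. \<sigma> (c0 # zs)) c1 (c1 # qs)"
proof -
  have A: "(\<forall>i. P i) \<longleftrightarrow> P 0 \<and> (\<forall>j. P (Suc j))" for P :: "nat \<Rightarrow> bool"
    by (metis not0_implies_Suc)
  show ?thesis unfolding consistent_prefix_def
    apply (subst A)
    apply (simp del: take_Suc_Cons)
    apply simp
    done
qed

lemma cip_cons: "consistent_inf_play T tau E \<sigma> c0 p \<longleftrightarrow>
   p 0 = c0 \<and> gmove T tau E c0 (p 1) \<and> (owner_of c0 = Dup \<longrightarrow> p 1 = \<sigma> [c0]) \<and>
   consistent_inf_play T tau E (\<lambda>zs. \<sigma> (c0 # zs)) (p 1) (\<lambda>i. p (Suc i))"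
proof -
  have A: "(\<forall>i. P i) \<longleftrightarrow> P 0 \<and> (\<forall>j. P (Suc j))" for P :: "nat \<Rightarrow> bool"
    by (metis not0_implies_Suc)
  show ?thesis unfolding consistent_inf_play_def
    apply (subst A)
    apply (subst map_upt_Suc)
    apply (subst map_upt_Suc)
    apply auto
    done
qed

lemma INFM_shift: "(\<exists>\<^sub>\<infinity>i. P (Suc i)) \<longleftrightarrow> (\<exists>\<^sub>\<infinity>i. P i)"
  unfolding INFM_nat
proof (intro iffI allI)
  fix m assume "\<forall>m. \<exists>n>m. P (Suc n)"
  then obtain n where "n > m" "P (Suc n)" by blast
  then show "\<exists>n>m. P n" by (intro exI[of _ "Suc n"]) auto
next
  fix m assume H: "\<forall>m. \<exists>n>m. P n"
  then obtain n where "n > Suc m" "P n" by blast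
  then show "\<exists>n>m. P (Suc n)" by (intro exI[of _ "n - 1"]) auto
qed

lemma cp_cases: "consistent_prefix T tau E \<sigma> c0 ps \<Longrightarrow> ps = [c0] \<or> (\<exists>c1 qs. ps = c0 # c1 # qs)"
  apply (drule cp_hd) by (metis list.exhaust)

lemma dw_cong:
  assumes "dup_winning T tau E \<sigma> c" "\<And>zs. zs \<noteq> [] \<Longrightarrow> hd zs = c \<Longrightarrow> \<sigma>' zs = \<sigma> zs"
  shows "dup_winning T tau E \<sigma>' c"
proof -
  have P: "consistent_prefix T tau E \<sigma>' c ps = consistent_prefix T tau E \<sigma> c ps" for ps
    unfolding consistent_prefix_def using assms(2)
    by (metis (no_types, lifting) Suc_lessD hd_take take_eq_Nil2 zero_less_Suc nat.simps(3) less_nat_zero_code)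
  have Q: "consistent_inf_play T tau E \<sigma>' c p = consistent_inf_play T tau E \<sigma> c p" for p
  proof -
    have "p 0 = c \<Longrightarrow> \<sigma>' (map p [0..<Suc i]) = \<sigma> (map p [0..<Suc i])" for i
      using assms(2)[of "map p [0..<Suc i]"] by (simp only: map_upt_Suc) simp
    then show ?thesis unfolding consistent_inf_play_def by metis
  qed
  have R: "consistent_prefix T tau E \<sigma> c ps \<Longrightarrow> \<sigma>' ps = \<sigma> ps" for ps
    using assms(2) unfolding consistent_prefix_def by auto
  show ?thesis using assms(1) unfolding dup_winning_def P Q using R by metis
qed

lemma dw_step:
  assumes W: "dup_winning T tau E \<sigma> c0" and M: "gmove T tau E c0 c1"
    and O: "owner_of c0 = Dup \<longrightarrow> c1 = \<sigma> [c0]"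
  shows "dup_winning T tau E (\<lambda>zs. \<sigma> (c0 # zs)) c1"
  unfolding dup_winning_def
proof (intro conjI allI impI)
  fix ps assume H: "consistent_prefix T tau E (\<lambda>zs. \<sigma> (c0 # zs)) c1 ps \<and>
        owner_of (last ps) = Dup \<and> (\<exists>c'. gmove T tau E (last ps) c')"
  obtain qs where ps: "ps = c1 # qs" using cp_hd[OF conjunct1[OF H]] by (rule that)
  have "consistent_prefix T tau E \<sigma> c0 (c0 # ps)" using H M O cp_cons[of \<sigma> c0 c1 qs] unfolding ps by simp
  moreover have "last (c0 # ps) = last ps" using ps by simp
  ultimately show "gmove T tau E (last ps) (\<sigma> (c0 # ps))"
    using W[unfolded dup_winning_def, THEN conjunct1, rule_format, of "c0 # ps"] H by simp
next
  fix ps assume H: "consistent_prefix T tau E (\<lambda>zs. \<sigma> (c0 # zs)) c1 ps \<and> (\<nexists>c'. gmove T tau E (last ps) c')"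
  obtain qs where ps: "ps = c1 # qs" using cp_hd[OF conjunct1[OF H]] by (rule that)
  have "consistent_prefix T tau E \<sigma> c0 (c0 # ps)" using H M O cp_cons[of \<sigma> c0 c1 qs] unfolding ps by simp
  moreover have "last (c0 # ps) = last ps" using ps by simp
  ultimately show "owner_of (last ps) = Spo"
    using W[unfolded dup_winning_def, THEN conjunct2, THEN conjunct1, rule_format, of "c0 # ps"] H by simp
next
  fix p assume H: "consistent_inf_play T tau E (\<lambda>zs. \<sigma> (c0 # zs)) c1 p"
  define q where "q = case_nat c0 p"
  have "consistent_inf_play T tau E \<sigma> c0 q"
  proof -
    have q0: "q 0 = c0" by (simp add: q_def)
    have q1: "q 1 = c1" using H by (simp add: q_def consistent_inf_play_def)
    have qs: "(\<lambda>i. q (Suc i)) = p" by (simp add: q_def)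
    show ?thesis unfolding cip_cons[of \<sigma> c0 q] q0 q1 qs using M O H by simp
  qed
  then have "\<exists>\<^sub>\<infinity>i. reward_of (q i) = Check" using W[unfolded dup_winning_def, THEN conjunct2, THEN conjunct2, rule_format] by blast
  then have "\<exists>\<^sub>\<infinity>i. reward_of (q (Suc i)) = Check" by (simp only: INFM_shift[of "\<lambda>i. reward_of (q i) = Check"])
  then show "\<exists>\<^sub>\<infinity>i. reward_of (p i) = Check" unfolding q_def by simp
qed

lemma dw_intro:
  assumes S: "\<And>c1. gmove T tau E c0 c1 \<Longrightarrow> (owner_of c0 = Dup \<longrightarrow> c1 = \<sigma> [c0]) \<Longrightarrow>
      dup_winning T tau E (\<lambda>zs. \<sigma> (c0 # zs)) c1"
    and D: "owner_of c0 = Dup \<Longrightarrow> gmove T tau E c0 (\<sigma> [c0])"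
  shows "dup_winning T tau E \<sigma> c0"
  unfolding dup_winning_def
proof (intro conjI allI impI)
  fix ps assume H: "consistent_prefix T tau E \<sigma> c0 ps \<and>
        owner_of (last ps) = Dup \<and> (\<exists>c'. gmove T tau E (last ps) c')"
  consider "ps = [c0]" | c1 qs where "ps = c0 # c1 # qs" using cp_cases[OF conjunct1[OF H]] by blast
  then show "gmove T tau E (last ps) (\<sigma> ps)"
  proof cases
    case 1 then show ?thesis using H D by simp
  next
    case 2
    then have C: "gmove T tau E c0 c1" "owner_of c0 = Dup \<longrightarrow> c1 = \<sigma> [c0]"
      "consistent_prefix T tau E (\<lambda>zs. \<sigma> (c0 # zs)) c1 (c1 # qs)"
      using H[THEN conjunct1] unfolding 2 cp_cons by blast+
    have L: "last ps = last (c1 # qs)" using 2 by simp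
    have W: "dup_winning T tau E (\<lambda>zs. \<sigma> (c0 # zs)) c1" by (rule S[OF C(1,2)])
    have "gmove T tau E (last (c1 # qs)) ((\<lambda>zs. \<sigma> (c0 # zs)) (c1 # qs))"
      using W[unfolded dup_winning_def, THEN conjunct1, rule_format, of "c1 # qs"] C(3) H L by simp
    then show ?thesis using L 2 by simp
  qed
next
  fix ps assume H: "consistent_prefix T tau E \<sigma> c0 ps \<and> (\<nexists>c'. gmove T tau E (last ps) c')"
  consider "ps = [c0]" | c1 qs where "ps = c0 # c1 # qs" using cp_cases[OF conjunct1[OF H]] by blast
  then show "owner_of (last ps) = Spo"
  proof cases
    case 1 then show ?thesis using H D by (metis last.simps owner.exhaust)
  next
    case 2
    then have C: "gmove T tau E c0 c1" "owner_of c0 = Dup \<longrightarrow> c1 = \<sigma> [c0]"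
      "consistent_prefix T tau E (\<lambda>zs. \<sigma> (c0 # zs)) c1 (c1 # qs)"
      using H[THEN conjunct1] unfolding 2 cp_cons by blast+
    have L: "last ps = last (c1 # qs)" using 2 by simp
    have W: "dup_winning T tau E (\<lambda>zs. \<sigma> (c0 # zs)) c1" by (rule S[OF C(1,2)])
    show ?thesis
      using W[unfolded dup_winning_def, THEN conjunct2, THEN conjunct1, rule_format, of "c1 # qs"] C(3) H L by simp
  qed
next
  fix p assume H: "consistent_inf_play T tau E \<sigma> c0 p"
  then have C: "gmove T tau E c0 (p 1)" "owner_of c0 = Dup \<longrightarrow> p 1 = \<sigma> [c0]"
    "consistent_inf_play T tau E (\<lambda>zs. \<sigma> (c0 # zs)) (p 1) (\<lambda>i. p (Suc i))"
    using H[unfolded cip_cons[of \<sigma> c0 p]] by blast+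
  then have "\<exists>\<^sub>\<infinity>i. reward_of (p (Suc i)) = Check" using S[OF C(1,2)] unfolding dup_winning_def by blast
  then show "\<exists>\<^sub>\<infinity>i. reward_of (p i) = Check" using INFM_shift by blast
qed

definition Win where "Win c \<longleftrightarrow> (\<exists>\<sigma>. dup_winning T tau E \<sigma> c)"

lemma Win_spo_D: "Win c \<Longrightarrow> owner_of c = Spo \<Longrightarrow> gmove T tau E c c' \<Longrightarrow> Win c'"
  unfolding Win_def using dw_step by fastforce

lemma Win_dup_D: "dup_winning T tau E \<sigma> c \<Longrightarrow> owner_of c = Dup \<Longrightarrow> gmove T tau E c (\<sigma> [c])"
proof -
  assume W: "dup_winning T tau E \<sigma> c" and O: "owner_of c = Dup"
  have cp: "consistent_prefix T tau E \<sigma> c [c]" by (rule cp_single)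
  have "\<exists>c'. gmove T tau E c c'" using W O cp unfolding dup_winning_def by force
  then show ?thesis using W O cp unfolding dup_winning_def by force
qed

lemma Win_spo_I: assumes "owner_of c = Spo" "\<And>c'. gmove T tau E c c' \<Longrightarrow> Win c'" shows "Win c"
proof -
  define \<sigma> where "\<sigma> = (\<lambda>zs. (SOME \<sigma>'. dup_winning T tau E \<sigma>' (hd (tl zs))) (tl zs))"
  have "dup_winning T tau E \<sigma> c"
  proof (rule dw_intro)
    fix c1 assume M: "gmove T tau E c c1"
    then obtain \<sigma>1 where "dup_winning T tau E \<sigma>1 c1" using assms Win_def by blast
    then have W1: "dup_winning T tau E (SOME \<sigma>'. dup_winning T tau E \<sigma>' c1) c1" by (rule someI[where P="\<lambda>\<sigma>'. dup_winning T tau E \<sigma>' c1"])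
    show "dup_winning T tau E (\<lambda>zs. \<sigma> (c # zs)) c1"
      by (rule dw_cong[OF W1]) (simp add: \<sigma>_def)
  qed (use assms in simp)
  then show ?thesis unfolding Win_def by blast
qed

lemma Win_dup_I: assumes "owner_of c = Dup" "gmove T tau E c c1" "Win c1" shows "Win c"
proof -
  obtain \<sigma>1 where W1: "dup_winning T tau E \<sigma>1 c1" using assms Win_def by blast
  define \<sigma> where "\<sigma> = (\<lambda>zs. if tl zs = [] then c1 else \<sigma>1 (tl zs))"
  have "dup_winning T tau E \<sigma> c"
  proof (rule dw_intro)
    fix c2 assume "gmove T tau E c c2" "owner_of c = Dup \<longrightarrow> c2 = \<sigma> [c]"
    then have "c2 = c1" using assms by (simp add: \<sigma>_def)
    show "dup_winning T tau E (\<lambda>zs. \<sigma> (c # zs)) c2"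
      unfolding \<open>c2 = c1\<close> by (rule dw_cong[OF W1]) (simp add: \<sigma>_def)
  qed (use assms in \<open>simp add: \<sigma>_def\<close>)
  then show ?thesis unfolding Win_def by blast
qed

lemma Win_dup_D2: "Win c \<Longrightarrow> owner_of c = Dup \<Longrightarrow> \<exists>c'. gmove T tau E c c' \<and> Win c'"
  unfolding Win_def using Win_dup_D dw_step by blast

lemma gmove_rew: "gmove T tau E (Conf o' p cc m r) c' \<Longrightarrow> gmove T tau E (Conf o' p cc m r') c'"
  by (erule gmove.cases) (auto intro: gmove.intros)

lemma Win_rew: "Win (Conf o' p cc m r) \<Longrightarrow> Win (Conf o' p cc m r')"
proof (cases o')
  case Spo
  assume W: "Win (Conf o' p cc m r)"
  show ?thesis
  proof (rule Win_spo_I)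
    show "owner_of (Conf o' p cc m r') = Spo" using Spo by simp
    fix c' assume "gmove T tau E (Conf o' p cc m r') c'"
    then have "gmove T tau E (Conf o' p cc m r) c'" by (rule gmove_rew)
    then show "Win c'" using W Spo Win_spo_D by simp
  qed
next
  case Dup
  assume "Win (Conf o' p cc m r)"
  then obtain c' where c': "gmove T tau E (Conf o' p cc m r) c'" "Win c'" using Win_dup_D2[of "Conf o' p cc m r"] Dup by auto
  show ?thesis
  proof (rule Win_dup_I)
    show "owner_of (Conf o' p cc m r') = Dup" using Dup by simp
    show "gmove T tau E (Conf o' p cc m r') c'" using c'(1) by (rule gmove_rew)
  qed (rule c'(2))
qed

lemma no_inf:
  assumes step: "\<And>\<sigma> c. I \<sigma> c \<Longrightarrow> \<exists>c'. gmove T tau E c c' \<and> (owner_of c = Dup \<longrightarrow> c' = \<sigma> [c]) \<and>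
        reward_of c' = Star \<and> I (\<lambda>zs. \<sigma> (c # zs)) c'"
    and I0: "I \<sigma>0 c0" and R0: "reward_of c0 = Star"
  shows "\<not> dup_winning T tau E \<sigma>0 c0"
proof
  assume W: "dup_winning T tau E \<sigma>0 c0"
  define Q where "Q = (\<lambda>\<sigma> c c'. gmove T tau E c c' \<and> (owner_of c = Dup \<longrightarrow> c' = \<sigma> [c]) \<and>
        reward_of c' = Star \<and> I (\<lambda>zs. \<sigma> (c # zs)) c')"
  define nxt where "nxt = (\<lambda>(\<sigma>, c). ((\<lambda>zs. \<sigma> (c # zs)), SOME c'. Q \<sigma> c c'))"
  define f where "f n = (nxt ^^ n) (\<sigma>0, c0)" for n
  have fS: "f (Suc n) = nxt (f n)" for n by (simp add: f_def)
  have nxtQ: "I \<sigma> c \<Longrightarrow> fst (nxt (\<sigma>, c)) = (\<lambda>zs. \<sigma> (c # zs)) \<and> Q \<sigma> c (snd (nxt (\<sigma>, c)))" for \<sigma> c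
  proof -
    assume "I \<sigma> c"
    then have "\<exists>c'. Q \<sigma> c c'" using step unfolding Q_def by blast
    then have "Q \<sigma> c (SOME c'. Q \<sigma> c c')" by (rule someI_ex)
    then show ?thesis by (simp add: nxt_def)
  qed
  have If: "I (fst (f n)) (snd (f n))" for n
  proof (induction n)
    case 0 then show ?case using I0 by (simp add: f_def)
  next
    case (Suc n)
    obtain \<sigma> c where fn: "f n = (\<sigma>, c)" by (cases "f n")
    have "I \<sigma> c" using Suc fn by simp
    then show ?case using nxtQ[of \<sigma> c] fS[of n] fn unfolding Q_def by auto
  qed
  define p where "p n = snd (f n)" for n
  have stepP: "gmove T tau E (p n) (p (Suc n)) \<and> (owner_of (p n) = Dup \<longrightarrow> p (Suc n) = fst (f n) [p n]) \<and>
      reward_of (p (Suc n)) = Star \<and> fst (f (Suc n)) = (\<lambda>zs. fst (f n) (p n # zs))" for n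
  proof -
    obtain \<sigma> c where fn: "f n = (\<sigma>, c)" by (cases "f n")
    have "I \<sigma> c" using If[of n] fn by simp
    then show ?thesis using nxtQ[of \<sigma> c] fS[of n] fn unfolding Q_def p_def by auto
  qed
  have sig: "fst (f n) = (\<lambda>zs. \<sigma>0 (map p [0..<n] @ zs))" for n
  proof (induction n)
    case 0 then show ?case by (simp add: f_def)
  next
    case (Suc n) then show ?case using stepP[of n] by simp
  qed
  have "consistent_inf_play T tau E \<sigma>0 c0 p"
    unfolding consistent_inf_play_def
  proof (intro conjI allI impI)
    show "p 0 = c0" by (simp add: p_def f_def)
  next
    fix i show "gmove T tau E (p i) (p (Suc i))" using stepP by blast
  next
    fix i assume "owner_of (p i) = Dup"
    then show "p (Suc i) = \<sigma>0 (map p [0..<Suc i])" using stepP[of i] sig[of i] by simp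
  qed
  then have "\<exists>\<^sub>\<infinity>i. reward_of (p i) = Check" using W unfolding dup_winning_def by blast
  then obtain n where "reward_of (p n) = Check" unfolding INFM_nat by blast
  moreover have "reward_of (p n) = Star"
  proof (cases n)
    case 0 then show ?thesis using R0 by (simp add: p_def f_def)
  next
    case (Suc m) then show ?thesis using stepP[of m] by simp
  qed
  ultimately show False by simp
qed

lemma dup_moves:
  assumes "gmove T tau E (Conf Dup (u,v) (Some(a,u')) (Some(w,f)) r) c'"
  shows "(a = tau \<and> c' = Conf Spo (u',w) None None Check) \<or>
    (\<exists>v'. f = Frown \<and> T w a v' \<and> (c' = Conf Spo (u',v') (Some(a,u')) (Some(v',Smile)) Star \<or>
        c' = Conf Spo (u',v') None None Check \<or>
        (Smile \<in> E \<and> c' = Conf Spo (u,v) (Some(a,u')) (Some(v',Smile)) Star))) \<or>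
    (\<exists>v'. T w tau v' \<and> (c' = Conf Spo (u,v') (Some(a,u')) (Some(v',f)) Star \<or>
        (f = Smile \<and> c' = Conf Spo (u',v') None None Check) \<or>
        (f \<in> E \<and> c' = Conf Spo (u,v) (Some(a,u')) (Some(v',f)) Star)))"
  using assms by (cases rule: gmove.cases) auto

lemma spo_moves:
  assumes "gmove T tau E (Conf Spo (s,t) c m r) c'"
  shows "(c \<noteq> None \<and> c' = Conf Dup (s,t) c m Star) \<or>
    (\<exists>a s'. T s a s' \<and> ((c = None \<and> c' = Conf Dup (s,t) (Some(a,s')) (Some(t,Frown)) Star) \<or>
        (c \<noteq> Some(a,s') \<and> c' = Conf Dup (s,t) (Some(a,s')) (Some(t,Frown)) Check))) \<or>
    (\<exists>a t'. T t a t' \<and> c' = Conf Dup (t,s) (Some(a,t')) (Some(s,Frown)) Check)"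
  using assms by (cases rule: gmove.cases) auto

lemma W_S1: "Win (Conf Spo p (Some ch) m r) \<Longrightarrow> Win (Conf Dup p (Some ch) m r')"
proof -
  assume W: "Win (Conf Spo p (Some ch) m r)"
  obtain u v where p: "p = (u,v)" by (cases p)
  have "gmove T tau E (Conf Spo p (Some ch) m r) (Conf Dup p (Some ch) m Star)"
    unfolding p by (rule S1) simp
  then have "Win (Conf Dup p (Some ch) m Star)" using W Win_spo_D by simp
  then show ?thesis by (rule Win_rew)
qed

lemma W_S2b: "Win (Conf Spo (s,t) c m r) \<Longrightarrow> T s a s' \<Longrightarrow> c \<noteq> Some (a,s') \<Longrightarrow>
    Win (Conf Dup (s,t) (Some(a,s')) (Some(t,Frown)) r')"
proof -
  assume W: "Win (Conf Spo (s,t) c m r)" and "T s a s'" "c \<noteq> Some (a,s')"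
  then have "gmove T tau E (Conf Spo (s,t) c m r) (Conf Dup (s,t) (Some(a,s')) (Some(t,Frown)) Check)"
    by (intro S2b)
  then have "Win (Conf Dup (s,t) (Some(a,s')) (Some(t,Frown)) Check)" using W Win_spo_D by simp
  then show ?thesis by (rule Win_rew)
qed

lemma W_S3: "Win (Conf Spo (s,t) c m r) \<Longrightarrow> T t a t' \<Longrightarrow>
    Win (Conf Dup (t,s) (Some(a,t')) (Some(s,Frown)) r')"
proof -
  assume W: "Win (Conf Spo (s,t) c m r)" and "T t a t'"
  then have "gmove T tau E (Conf Spo (s,t) c m r) (Conf Dup (t,s) (Some(a,t')) (Some(s,Frown)) Check)"
    by (intro S3)
  then have "Win (Conf Dup (t,s) (Some(a,t')) (Some(s,Frown)) Check)" using W Win_spo_D by simp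
  then show ?thesis by (rule Win_rew)
qed

lemma W_symm: "Win (Conf Spo (s,t) None None Star) \<Longrightarrow> Win (Conf Spo (t,s) None None Star)"
proof -
  assume W: "Win (Conf Spo (s,t) None None Star)"
  show ?thesis
  proof (rule Win_spo_I)
    fix c' assume "gmove T tau E (Conf Spo (t,s) None None Star) c'"
    from spo_moves[OF this] show "Win c'"
    proof (elim disjE exE conjE)
      fix a t' assume "T t a t'" "c' = Conf Dup (t,s) (Some(a,t')) (Some(s,Frown)) Star"
      then show ?thesis using W_S3[OF W] by simp
    next
      fix a t' assume "T t a t'" "c' = Conf Dup (t,s) (Some(a,t')) (Some(s,Frown)) Check"
      then show ?thesis using W_S3[OF W] by simp
    next
      fix a s' assume "T s a s'" "c' = Conf Dup (s,t) (Some(a,s')) (Some(t,Frown)) Check"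
      then show ?thesis using W_S2b[OF W] by simp
    qed simp_all
  qed simp
qed

lemma W_X: "Win (Conf Spo (u,w) None None Star) \<Longrightarrow> T u a u' \<Longrightarrow>
   Win (Conf Spo (u,w) (Some(a,u')) (Some(w,Frown)) Star)"
proof -
  assume W: "Win (Conf Spo (u,w) None None Star)" and st: "T u a u'"
  show ?thesis
  proof (rule Win_spo_I)
    fix c' assume "gmove T tau E (Conf Spo (u,w) (Some(a,u')) (Some(w,Frown)) Star) c'"
    from spo_moves[OF this] show "Win c'"
    proof (elim disjE exE conjE)
      assume "c' = Conf Dup (u, w) (Some (a, u')) (Some (w, Frown)) Star"
      then show ?thesis using W_S2b[OF W st] by simp
    next
      fix b u'' assume "T u b u''" "c' = Conf Dup (u,w) (Some(b,u'')) (Some(w,Frown)) Check"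
      then show ?thesis using W_S2b[OF W] by simp
    next
      fix b w' assume "T w b w'" "c' = Conf Dup (w,u) (Some(b,w')) (Some(u,Frown)) Check"
      then show ?thesis using W_S3[OF W] by simp
    qed simp_all
  qed simp
qed

lemma W_Y: "Win (Conf Spo (u,w) (Some(a,u')) (Some(w,Frown)) Star) \<Longrightarrow>
   Win (Conf Spo (u,w) None None Star)"
proof -
  assume W: "Win (Conf Spo (u,w) (Some(a,u')) (Some(w,Frown)) Star)"
  have K: "T u b u'' \<Longrightarrow> Win (Conf Dup (u,w) (Some(b,u'')) (Some(w,Frown)) r)" for b u'' r
  proof (cases "(b,u'') = (a,u')")
    case True then show ?thesis using W_S1[OF W] by simp
  next
    case False
    assume st: "T u b u''"
    have "Some (a,u') \<noteq> Some (b,u'')" using False by auto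
    then show ?thesis using W_S2b[OF W st] by blast
  qed
  show ?thesis
  proof (rule Win_spo_I)
    fix c' assume "gmove T tau E (Conf Spo (u,w) None None Star) c'"
    from spo_moves[OF this] show "Win c'"
    proof (elim disjE exE conjE)
      fix b u'' assume "T u b u''" "c' = Conf Dup (u,w) (Some(b,u'')) (Some(w,Frown)) Star"
      then show ?thesis using K by simp
    next
      fix b u'' assume "T u b u''" "c' = Conf Dup (u,w) (Some(b,u'')) (Some(w,Frown)) Check"
      then show ?thesis using K by simp
    next
      fix b w' assume "T w b w'" "c' = Conf Dup (w,u) (Some(b,w')) (Some(u,Frown)) Check"
      then show ?thesis using W_S3[OF W] by simp
    qed simp_all
  qed simp
qed

lemma W_K:
  assumes M: "Win (Conf Spo (u,v) (Some(a,u)) (Some(v,Smile)) Star)" and tv: "T v tau v'"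
    and G': "Win (Conf Spo (u,v') None None Star)"
  shows "Win (Conf Spo (u,v) None None Star)"
proof -
  have K: "T u b u'' \<Longrightarrow> Win (Conf Dup (u,v) (Some(b,u'')) (Some(v,Frown)) r)" for b u'' r
  proof (cases "(b,u'') = (a,u)")
    case True
    assume st: "T u b u''"
    have gm: "gmove T tau E (Conf Dup (u,v) (Some(a,u)) (Some(v,Frown)) r)
        (Conf Spo (u,v') (Some(a,u)) (Some(v',Frown)) Star)" using tv by (rule D3a)
    have wn: "Win (Conf Spo (u,v') (Some(a,u)) (Some(v',Frown)) Star)"
      using W_X[OF G'] st True by simp
    have "Win (Conf Dup (u,v) (Some(a,u)) (Some(v,Frown)) r)"
      by (rule Win_dup_I[OF _ gm wn]) simp
    then show ?thesis using True by simp
  next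
    case False
    assume st: "T u b u''"
    have "Some (a,u) \<noteq> Some (b,u'')" using False by auto
    then show ?thesis using W_S2b[OF M st] by blast
  qed
  show ?thesis
  proof (rule Win_spo_I)
    fix c' assume "gmove T tau E (Conf Spo (u,v) None None Star) c'"
    from spo_moves[OF this] show "Win c'"
    proof (elim disjE exE conjE)
      fix b u'' assume "T u b u''" "c' = Conf Dup (u,v) (Some(b,u'')) (Some(v,Frown)) Star"
      then show ?thesis using K by simp
    next
      fix b u'' assume "T u b u''" "c' = Conf Dup (u,v) (Some(b,u'')) (Some(v,Frown)) Check"
      then show ?thesis using K by simp
    next
      fix b w' assume "T v b w'" "c' = Conf Dup (v,u) (Some(b,w')) (Some(u,Frown)) Check"
      then show ?thesis using W_S3[OF M] by simp
    qed simp_all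
  qed simp
qed

lemma W_SL:
  assumes nE: "Smile \<notin> E"
    and W0: "dup_winning T tau E \<sigma>0 (Conf Spo (u,v0) (Some(a,u)) (Some(v0,Smile)) Star)"
  shows "Win (Conf Spo (u,v0) None None Star)"
proof (rule ccontr)
  assume N0: "\<not> Win (Conf Spo (u,v0) None None Star)"
  define MS where "MS v = Conf Spo (u,v) (Some(a,u)) (Some(v,Smile)) Star" for v
  define MD where "MD v = Conf Dup (u,v) (Some(a,u)) (Some(v,Smile)) Star" for v
  define I where "I \<sigma> c \<longleftrightarrow> dup_winning T tau E \<sigma> c \<and>
     ((\<exists>v. c = MS v \<and> \<not> Win (Conf Spo (u,v) None None Star)) \<or>
      (\<exists>v. c = MD v \<and> Win (MS v) \<and> \<not> Win (Conf Spo (u,v) None None Star)))" for \<sigma> c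
  have "\<not> dup_winning T tau E \<sigma>0 (MS v0)"
  proof (rule no_inf[where I=I])
    show "I \<sigma>0 (MS v0)" using W0 N0 unfolding I_def MS_def by blast
    show "reward_of (MS v0) = Star" by (simp add: MS_def)
  next
    fix \<sigma> c assume Ic: "I \<sigma> c"
    then have dw: "dup_winning T tau E \<sigma> c" by (simp add: I_def)
    from Ic consider v where "c = MS v" "\<not> Win (Conf Spo (u,v) None None Star)"
      | v where "c = MD v" "Win (MS v)" "\<not> Win (Conf Spo (u,v) None None Star)"
      unfolding I_def by blast
    then show "\<exists>c'. gmove T tau E c c' \<and> (owner_of c = Dup \<longrightarrow> c' = \<sigma> [c]) \<and>
        reward_of c' = Star \<and> I (\<lambda>zs. \<sigma> (c # zs)) c'"
    proof cases
      case 1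
      have gm: "gmove T tau E c (MD v)" unfolding 1 MS_def MD_def by (rule S1) simp
      have dw': "dup_winning T tau E (\<lambda>zs. \<sigma> (c#zs)) (MD v)"
        using dw_step[OF dw gm] 1 by (simp add: MS_def)
      have "Win (MS v)" using dw 1 Win_def by blast
      then have IM: "I (\<lambda>zs. \<sigma> (c#zs)) (MD v)" using dw' 1(2) unfolding I_def
        by (intro conjI disjI2 exI[of _ v]) auto
      have "owner_of c = Spo" "reward_of (MD v) = Star" using 1 by (simp_all add: MS_def MD_def)
      then show ?thesis using gm IM by (intro exI[of _ "MD v"] conjI) auto
    next
      case 2
      define c' where "c' = \<sigma> [c]"
      have oD: "owner_of c = Dup" using 2 by (simp add: MD_def)
      have gm: "gmove T tau E c c'" using Win_dup_D[OF dw oD] unfolding c'_def .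
      have dw': "dup_winning T tau E (\<lambda>zs. \<sigma> (c#zs)) c'" using dw_step[OF dw gm] by (simp add: c'_def)
      then have Wc': "Win c'" by (auto simp: Win_def)
      have gm': "gmove T tau E (Conf Dup (u,v) (Some(a,u)) (Some(v,Smile)) Star) c'"
        using gm 2 by (simp add: MD_def)
      have WM: "Win (Conf Spo (u,v) (Some(a,u)) (Some(v,Smile)) Star)" using 2 by (simp add: MS_def)
      from dup_moves[OF gm'] nE consider (d1) "a = tau" "c' = Conf Spo (u,v) None None Check"
        | (d3a) v' where "T v tau v'" "c' = MS v'"
        | (d3b) v' where "T v tau v'" "c' = Conf Spo (u,v') None None Check"
        unfolding MS_def by auto
      then show ?thesis
      proof cases
        case d1
        then have "Win (Conf Spo (u,v) None None Star)" using Wc' Win_rew by simp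
        then show ?thesis using 2 by simp
      next
        case d3a
        have "\<not> Win (Conf Spo (u,v') None None Star)"
          using W_K[OF WM d3a(1)] 2 by blast
        then have IM: "I (\<lambda>zs. \<sigma> (c#zs)) c'" using dw' d3a(2) unfolding I_def
          by (intro conjI disjI1 exI[of _ v']) auto
        have "reward_of c' = Star" using d3a by (simp add: MS_def)
        then show ?thesis using gm IM c'_def by (intro exI[of _ c'] conjI) auto
      next
        case d3b
        then have "Win (Conf Spo (u,v') None None Star)" using Wc' Win_rew by simp
        then have "Win (Conf Spo (u,v) None None Star)" using W_K[OF WM d3b(1)] by blast
        then show ?thesis using 2 by simp
      qed
    qed
  qed
  then show False using W0 by (simp add: MS_def)
qed

lemma ts_refl: "tau_steps T tau w w" by (simp add: tau_steps_def)
lemma ts_step: "tau_steps T tau w v \<Longrightarrow> T v tau v' \<Longrightarrow> tau_steps T tau w v'"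
  unfolding tau_steps_def by (rule rtranclp.rtrancl_into_rtrancl)
lemma mstep_alt: "mstep T tau x R s t t1 \<longleftrightarrow> tau_steps T tau t t1 \<and> (x = Mb \<longrightarrow> R s t \<and> R s t1)"
  by (cases x) (simp_all add: mstep_def)
lemma ge_Win: "game_equiv T tau E u v \<longleftrightarrow> Win (Conf Spo (u,v) None None Star)"
  by (simp add: game_equiv_def Win_def)

lemma W_transfer:
  assumes EF: "Frown \<in> E \<longleftrightarrow> x = Mo" and ES: "Smile \<in> E \<longleftrightarrow> y = Mo"
    and G0: "Win (Conf Spo (s,t) None None Star)" and st: "T s a s'"
  shows "(a = tau \<and> Win (Conf Spo (s',t) None None Star)) \<or>
    (\<exists>t' t1 t2. mstep T tau x (game_equiv T tau E) s t t1 \<and> T t1 a t2 \<and>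
        mstep T tau y (game_equiv T tau E) s' t2 t' \<and> Win (Conf Spo (s',t') None None Star))"
proof (rule ccontr)
  assume NG: "\<not> ?thesis"
  define G where "G u v = Win (Conf Spo (u,v) None None Star)" for u v
  have EXIT: "False" if "tau_steps T tau t t1" "x = Mb \<longrightarrow> G s t1" "T t1 a t2" "tau_steps T tau t2 t'"
     "y = Mb \<longrightarrow> G s' t2" "G s' t'" for t1 t2 t'
  proof -
    have "mstep T tau x (game_equiv T tau E) s t t1" using that G0 by (simp add: mstep_alt ge_Win G_def)
    moreover have "mstep T tau y (game_equiv T tau E) s' t2 t'" using that by (simp add: mstep_alt ge_Win G_def)
    ultimately show False using NG that(3,6) unfolding G_def by blast
  qed
  have NG1: "\<not> (a = tau \<and> G s' t)" using NG unfolding G_def by blast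
  obtain \<sigma> where dw0: "dup_winning T tau E \<sigma> (Conf Spo (s,t) None None Star)" using G0 Win_def by blast
  define D0 where "D0 = Conf Dup (s,t) (Some(a,s')) (Some(t,Frown)) Star"
  have gm0: "gmove T tau E (Conf Spo (s,t) None None Star) D0" unfolding D0_def using st by (rule S2a)
  have dwD0: "dup_winning T tau E (\<lambda>zs. \<sigma> (Conf Spo (s,t) None None Star # zs)) D0"
    using dw_step[OF dw0 gm0] by simp
  define FrC where "FrC u v w \<longleftrightarrow> tau_steps T tau t w \<and> u = s \<and> (x = Mb \<longrightarrow> v = w \<and> G s w) \<and>
      (w = t \<or> (\<exists>w0. tau_steps T tau t w0 \<and> T w0 tau w \<and> (x = Mb \<longrightarrow> G s w0)))" for u v w
  define SmC where "SmC u v w \<longleftrightarrow> (\<exists>t1 t2. tau_steps T tau t t1 \<and> T t1 a t2 \<and> tau_steps T tau t2 w \<and>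
      (x = Mb \<longrightarrow> G s t1) \<and> (y = Mb \<longrightarrow> u = s' \<and> v = w \<and> G s' t2))" for u v w
  define Inv where "Inv c \<longleftrightarrow> (\<exists>o' u v w f. c = Conf o' (u,v) (Some(a,s')) (Some(w,f)) Star \<and>
      (f = Frown \<longrightarrow> FrC u v w) \<and> (f = Smile \<longrightarrow> SmC u v w))" for c
  define I where "I \<sigma> c \<longleftrightarrow> dup_winning T tau E \<sigma> c \<and> Inv c" for \<sigma> c
  have GI: "G s t" using G0 G_def by simp
  have "\<not> dup_winning T tau E (\<lambda>zs. \<sigma> (Conf Spo (s,t) None None Star # zs)) D0"
  proof (rule no_inf[where I=I])
    have "FrC s t t" unfolding FrC_def using GI by (simp add: ts_refl)
    then show "I (\<lambda>zs. \<sigma> (Conf Spo (s,t) None None Star # zs)) D0" using dwD0 unfolding I_def Inv_def D0_def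
      by (intro conjI exI[of _ Dup] exI[of _ s] exI[of _ t] exI[of _ t] exI[of _ Frown]) auto
    show "reward_of D0 = Star" by (simp add: D0_def)
  next
    fix \<sigma> c assume Ic: "I \<sigma> c"
    then have dw: "dup_winning T tau E \<sigma> c" by (simp add: I_def)
    from Ic obtain o' u v w f where c: "c = Conf o' (u,v) (Some(a,s')) (Some(w,f)) Star"
      and fr: "f = Frown \<longrightarrow> FrC u v w" and sm: "f = Smile \<longrightarrow> SmC u v w"
      unfolding I_def Inv_def by blast
    have CONT: "\<exists>c'. gmove T tau E c c' \<and> (owner_of c = Dup \<longrightarrow> c' = \<sigma> [c]) \<and>
        reward_of c' = Star \<and> I (\<lambda>zs. \<sigma> (c # zs)) c'"
      if "gmove T tau E c c'" "owner_of c = Dup \<longrightarrow> c' = \<sigma> [c]"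
         "c' = Conf o2 (u2,v2) (Some(a,s')) (Some(w2,f2)) Star"
         "f2 = Frown \<longrightarrow> FrC u2 v2 w2" "f2 = Smile \<longrightarrow> SmC u2 v2 w2" for c' o2 u2 v2 w2 f2
    proof -
      have "dup_winning T tau E (\<lambda>zs. \<sigma> (c # zs)) c'" using dw_step[OF dw that(1,2)] .
      moreover have "Inv c'" unfolding Inv_def using that(3,4,5) by blast
      ultimately have "I (\<lambda>zs. \<sigma> (c # zs)) c'" unfolding I_def by blast
      then show ?thesis using that(1,2,3) by (intro exI[of _ c'] conjI) auto
    qed
    show "\<exists>c'. gmove T tau E c c' \<and> (owner_of c = Dup \<longrightarrow> c' = \<sigma> [c]) \<and>
        reward_of c' = Star \<and> I (\<lambda>zs. \<sigma> (c # zs)) c'"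
    proof (cases o')
      case Spo
      have gm: "gmove T tau E c (Conf Dup (u,v) (Some(a,s')) (Some(w,f)) Star)"
        unfolding c Spo by (rule S1) simp
      show ?thesis by (rule CONT[OF gm _ refl fr sm]) (simp add: c Spo)
    next
      case Dup
      define c' where "c' = \<sigma> [c]"
      have oD: "owner_of c = Dup" using c Dup by simp
      have gm: "gmove T tau E c c'" using Win_dup_D[OF dw oD] unfolding c'_def .
      have dw': "dup_winning T tau E (\<lambda>zs. \<sigma> (c#zs)) c'" using dw_step[OF dw gm] by (simp add: c'_def)
      then have Wc': "Win c'" by (auto simp: Win_def)
      have own: "owner_of c = Dup \<longrightarrow> c' = \<sigma> [c]" by (simp add: c'_def)
      have gm': "gmove T tau E (Conf Dup (u,v) (Some(a,s')) (Some(w,f)) Star) c'"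
        using gm c Dup by simp
      have ftag: "f = Frown \<or> f = Smile" by (cases f) auto
      from dup_moves[OF gm'] show ?thesis
      proof (elim disjE exE conjE)
        assume at: "a = tau" and c'e: "c' = Conf Spo (s', w) None None Check"
        have Gw: "G s' w" using Wc' c'e Win_rew unfolding G_def by blast
        show ?thesis
        proof (cases "f = Frown")
          case True
          then have F: "FrC u v w" using fr by simp
          show ?thesis
          proof (cases "w = t")
            case True then show ?thesis using NG1 at Gw by simp
          next
            case False
            then obtain w0 where "tau_steps T tau t w0" "T w0 tau w" "x = Mb \<longrightarrow> G s w0"
              using F unfolding FrC_def by blast
            then show ?thesis using EXIT[of w0 w w] at Gw by (simp add: ts_refl)
          qed
        next
          case False
          then have "SmC u v w" using sm ftag by simp
          then obtain t1 t2 where "tau_steps T tau t t1" "T t1 a t2" "tau_steps T tau t2 w"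
            "x = Mb \<longrightarrow> G s t1" "y = Mb \<longrightarrow> G s' t2" unfolding SmC_def by blast
          then show ?thesis using EXIT[of t1 t2 w] Gw by simp
        qed
      next
        fix v' assume fF: "f = Frown" and tw: "T w a v'"
          and c'e: "c' = Conf Spo (s',v') (Some(a,s')) (Some(v',Smile)) Star"
        have F: "FrC u v w" using fr fF by simp
        have "y = Mb \<longrightarrow> G s' v'"
        proof
          assume "y = Mb"
          then have "Smile \<notin> E" using ES by simp
          then show "G s' v'" using W_SL dw' c'e unfolding G_def by blast
        qed
        then have "SmC s' v' v'" using F tw unfolding FrC_def SmC_def by (blast intro: ts_refl)
        then show ?thesis using CONT[OF gm own c'e] by simp
      next
        fix v' assume fF: "f = Frown" and tw: "T w a v'"
          and c'e: "c' = Conf Spo (s',v') None None Check"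
        have F: "FrC u v w" using fr fF by simp
        have Gv: "G s' v'" using Wc' c'e Win_rew unfolding G_def by blast
        show ?thesis using EXIT[of w v' v'] F tw Gv unfolding FrC_def by (simp add: ts_refl)
      next
        fix v' assume fF: "f = Frown" and tw: "T w a v'" and SE: "Smile \<in> E"
          and c'e: "c' = Conf Spo (u,v) (Some(a,s')) (Some(v',Smile)) Star"
        have F: "FrC u v w" using fr fF by simp
        have "y = Mo" using SE ES by simp
        then have "SmC u v v'" using F tw unfolding FrC_def SmC_def by (blast intro: ts_refl)
        then show ?thesis using CONT[OF gm own c'e] by simp
      next
        fix v' assume tw: "T w tau v'"
          and c'e: "c' = Conf Spo (u,v') (Some(a,s')) (Some(v',f)) Star"
        show ?thesis
        proof (cases "f = Frown")
          case True
          then have F: "FrC u v w" using fr by simp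
          have "x = Mb \<longrightarrow> G s v'"
          proof
            assume "x = Mb"
            have "Win (Conf Spo (s,v') (Some(a,s')) (Some(v',Frown)) Star)"
              using Wc' c'e True F unfolding FrC_def by simp
            then show "G s v'" unfolding G_def by (rule W_Y)
          qed
          then have "FrC u v' v'" using F tw unfolding FrC_def by (blast intro: ts_step)
          then show ?thesis using CONT[OF gm own c'e] True by simp
        next
          case False
          then have fS: "f = Smile" using ftag by simp
          have "SmC u v' v'" using sm fS tw unfolding SmC_def by (blast intro: ts_step)
          then show ?thesis using CONT[OF gm own c'e] fS by simp
        qed
      next
        fix v' assume tw: "T w tau v'" and fS: "f = Smile"
          and c'e: "c' = Conf Spo (s',v') None None Check"
        have Gv: "G s' v'" using Wc' c'e Win_rew unfolding G_def by blast
        obtain t1 t2 where "tau_steps T tau t t1" "T t1 a t2" "tau_steps T tau t2 w"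
          "x = Mb \<longrightarrow> G s t1" "y = Mb \<longrightarrow> G s' t2" using sm fS unfolding SmC_def by blast
        then show ?thesis using EXIT[of t1 t2 v'] Gv tw ts_step by blast
      next
        fix v' assume tw: "T w tau v'" and fE: "f \<in> E"
          and c'e: "c' = Conf Spo (u,v) (Some(a,s')) (Some(v',f)) Star"
        show ?thesis
        proof (cases "f = Frown")
          case True
          then have F: "FrC u v w" using fr by simp
          have "x = Mo" using True fE EF by simp
          then have "FrC u v v'" using F tw unfolding FrC_def by (blast intro: ts_step)
          then show ?thesis using CONT[OF gm own c'e] True by simp
        next
          case False
          then have fS: "f = Smile" using ftag by simp
          have "y = Mo" using fS fE ES by simp
          then have "SmC u v v'" using sm fS tw unfolding SmC_def by (blast intro: ts_step)
          then show ?thesis using CONT[OF gm own c'e] fS by simp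
        qed
      qed
    qed
  qed
  then show False using dwD0 by simp
qed

end

theorem lemma5p10:
  fixes T :: "'s \<Rightarrow> 'a \<Rightarrow> 's \<Rightarrow> bool" and tau :: 'a and x y :: mode
  shows "generic_bisim T tau x y (game_equiv T tau (Eset x y))"
proof -
  have EF: "Frown \<in> Eset x y \<longleftrightarrow> x = Mo" by (simp add: Eset_def)
  have ES: "Smile \<in> Eset x y \<longleftrightarrow> y = Mo" by (simp add: Eset_def)
  show ?thesis unfolding generic_bisim_def
  proof (intro conjI allI impI)
    fix s t assume "game_equiv T tau (Eset x y) s t"
    then show "game_equiv T tau (Eset x y) t s" by (simp add: ge_Win W_symm)
  next
    fix s t a s' assume H: "game_equiv T tau (Eset x y) s t \<and> T s a s'"
    then have "Win T tau (Eset x y) (Conf Spo (s,t) None None Star)" by (simp add: ge_Win)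
    from W_transfer[OF EF ES this] H show "(a = tau \<and> game_equiv T tau (Eset x y) s' t) \<or>
        (\<exists>t' t1 t2. mstep T tau x (game_equiv T tau (Eset x y)) s t t1 \<and> T t1 a t2 \<and>
           mstep T tau y (game_equiv T tau (Eset x y)) s' t2 t' \<and> game_equiv T tau (Eset x y) s' t')"
      by (simp add: ge_Win)
  qed
qed

end
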